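(* Let $n\ge3$, $B$ the closed unit disc, $X\in C^3(B,\mathbb R^n)$ a conformally parametrized immersion ($X_u\cdot X_u=W=X_v\cdot X_v$, $X_u\cdot X_v=0$) with a $C^2$ orthonormal normal section $\{N_1,\dots,N_{n-2}\}$, second fundamental forms $L_{\sigma,ij}=X_{u^iu^j}\cdot N_\sigma$, mean curvatures $H_\sigma=\frac{L_{\sigma,11}+L_{\sigma,22}}{2W}$ and torsion coefficients $T^\omega_{\sigma,i}$. Define the Hopf functions $\mathcal H_\sigma:=L_{\sigma,11}-L_{\sigma,22}-2iL_{\sigma,12}$. Then for all $\sigma=1,\dots,n-2$, $$\mathcal H_{\sigma,\overline w}=2H_{\sigma,w}W+\sum_{\omega=1}^{n-2}\Big\{(L_{\omega,22}+iL_{\omega,12})T^\sigma_{\omega,1}-(L_{\omega,21}+iL_{\omega,11})T^\sigma_{\omega,2}\Big\}.$$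
   Context: $w=u+iv$, $\Phi_w=\frac12(\Phi_u-i\Phi_v)$, $\Phi_{\overline w}=\frac12(\Phi_u+i\Phi_v)$. Orthonormal normal section: $N_\sigma\cdot X_{u^i}=0$, $N_\sigma\cdot N_\omega=\delta_{\sigma\omega}$ ($u^1=u,u^2=v$). Torsion coefficients: $T^\omega_{\sigma,i}=N_{\sigma,u^i}\cdot N_\omega$ for $\sigma\ne\omega$, $T^\sigma_{\sigma,i}=0$. *)

theory Defs
  imports "HOL-Analysis.Analysis"
begin

text \<open>Functions of the two real parameters (u,v) = (u^1,u^2); w = u + i v.\<close>

definition pu :: "(real \<times> real \<Rightarrow> 'a::real_normed_vector) \<Rightarrow> real \<times> real \<Rightarrow> 'a" where
  "pu f = (\<lambda>(u,v). vector_derivative (\<lambda>s. f (s,v)) (at u))"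

definition pv :: "(real \<times> real \<Rightarrow> 'a::real_normed_vector) \<Rightarrow> real \<times> real \<Rightarrow> 'a" where
  "pv f = (\<lambda>(u,v). vector_derivative (\<lambda>t. f (u,t)) (at v))"

definition pd :: "nat \<Rightarrow> (real \<times> real \<Rightarrow> 'a::real_normed_vector) \<Rightarrow> real \<times> real \<Rightarrow> 'a" where
  "pd i f = (if i = 1 then pu f else pv f)"

fun Ck :: "nat \<Rightarrow> (real \<times> real \<Rightarrow> 'a::real_normed_vector) \<Rightarrow> (real \<times> real) set \<Rightarrow> bool" where
  "Ck 0 f S = continuous_on S f"
| "Ck (Suc k) f S = (continuous_on S f \<and>
      (\<forall>p\<in>S. (\<lambda>s. f (s, snd p)) differentiable (at (fst p)) \<and>
              (\<lambda>t. f (fst p, t)) differentiable (at (snd p))) \<and>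
      Ck k (pu f) S \<and> Ck k (pv f) S)"

definition dw :: "(real \<times> real \<Rightarrow> complex) \<Rightarrow> real \<times> real \<Rightarrow> complex" where
  "dw f p = (pu f p - \<i> * pv f p) / 2"

definition dwbar :: "(real \<times> real \<Rightarrow> complex) \<Rightarrow> real \<times> real \<Rightarrow> complex" where
  "dwbar f p = (pu f p + \<i> * pv f p) / 2"

definition sff :: "(real \<times> real \<Rightarrow> real^'n) \<Rightarrow> (nat \<Rightarrow> real \<times> real \<Rightarrow> real^'n)
    \<Rightarrow> nat \<Rightarrow> nat \<Rightarrow> nat \<Rightarrow> real \<times> real \<Rightarrow> real" where
  "sff X N \<sigma> i j p = pd i (pd j X) p \<bullet> N \<sigma> p"

definition areaW :: "(real \<times> real \<Rightarrow> real^'n) \<Rightarrow> real \<times> real \<Rightarrow> real" where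
  "areaW X p = pu X p \<bullet> pu X p"

definition meanH :: "(real \<times> real \<Rightarrow> real^'n) \<Rightarrow> (nat \<Rightarrow> real \<times> real \<Rightarrow> real^'n)
    \<Rightarrow> nat \<Rightarrow> real \<times> real \<Rightarrow> real" where
  "meanH X N \<sigma> p = (sff X N \<sigma> 1 1 p + sff X N \<sigma> 2 2 p) / (2 * areaW X p)"

text \<open>torsion coefficients: torsion N \<sigma> \<omega> i p = T^\<omega>_{\<sigma>,i} = N_{\<sigma>,u^i} \<cdot> N_\<omega> (\<sigma> \<noteq> \<omega>), 0 if \<sigma> = \<omega>\<close>
definition torsion :: "(nat \<Rightarrow> real \<times> real \<Rightarrow> real^'n) \<Rightarrow> nat \<Rightarrow> nat \<Rightarrow> nat \<Rightarrow> real \<times> real \<Rightarrow> real" where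
  "torsion N \<sigma> \<omega> i p = (if \<sigma> = \<omega> then 0 else pd i (N \<sigma>) p \<bullet> N \<omega> p)"

definition hopf :: "(real \<times> real \<Rightarrow> real^'n) \<Rightarrow> (nat \<Rightarrow> real \<times> real \<Rightarrow> real^'n)
    \<Rightarrow> nat \<Rightarrow> real \<times> real \<Rightarrow> complex" where
  "hopf X N \<sigma> p = complex_of_real (sff X N \<sigma> 1 1 p - sff X N \<sigma> 2 2 p)
                    - 2 * \<i> * complex_of_real (sff X N \<sigma> 1 2 p)"

end

theory Submission
  imports Defs
begin

definition hpu :: "(real \<times> real \<Rightarrow> 'a::real_normed_vector) \<Rightarrow> real \<times> real \<Rightarrow> 'a \<Rightarrow> bool" where
  "hpu f q D \<longleftrightarrow> ((\<lambda>s. f (s, snd q)) has_vector_derivative D) (at (fst q))"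
definition hpv :: "(real \<times> real \<Rightarrow> 'a::real_normed_vector) \<Rightarrow> real \<times> real \<Rightarrow> 'a \<Rightarrow> bool" where
  "hpv f q D \<longleftrightarrow> ((\<lambda>t. f (fst q, t)) has_vector_derivative D) (at (snd q))"

lemma pu_eq: "hpu f q D \<Longrightarrow> pu f q = D"
  by (cases q) (simp add: hpu_def pu_def vector_derivative_at)
lemma pv_eq: "hpv f q D \<Longrightarrow> pv f q = D"
  by (cases q) (simp add: hpv_def pv_def vector_derivative_at)

lemma Ck_hpu: "Ck (Suc k) f S \<Longrightarrow> q \<in> S \<Longrightarrow> hpu f q (pu f q)"
  by (cases q) (auto simp: hpu_def pu_def vector_derivative_works[symmetric])
lemma Ck_hpv: "Ck (Suc k) f S \<Longrightarrow> q \<in> S \<Longrightarrow> hpv f q (pv f q)"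
  by (cases q) (auto simp: hpv_def pv_def vector_derivative_works[symmetric])

lemma hpu_inner: "hpu f q a \<Longrightarrow> hpu g q b \<Longrightarrow> hpu (\<lambda>x. f x \<bullet> g x) q (a \<bullet> g q + f q \<bullet> b)"
  unfolding hpu_def
  by (drule (1) bounded_bilinear.has_vector_derivative[OF bounded_bilinear_inner]) (cases q, simp add: add.commute)
lemma hpv_inner: "hpv f q a \<Longrightarrow> hpv g q b \<Longrightarrow> hpv (\<lambda>x. f x \<bullet> g x) q (a \<bullet> g q + f q \<bullet> b)"
  unfolding hpv_def
  by (drule (1) bounded_bilinear.has_vector_derivative[OF bounded_bilinear_inner]) (cases q, simp add: add.commute)

lemma hpu_const: "hpu (\<lambda>x. c) q 0" by (simp add: hpu_def)
lemma hpv_const: "hpv (\<lambda>x. c) q 0" by (simp add: hpv_def)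

lemma hpu_add: "hpu f q a \<Longrightarrow> hpu g q b \<Longrightarrow> hpu (\<lambda>x. f x + g x) q (a + b)"
  unfolding hpu_def by (rule has_vector_derivative_add)
lemma hpv_add: "hpv f q a \<Longrightarrow> hpv g q b \<Longrightarrow> hpv (\<lambda>x. f x + g x) q (a + b)"
  unfolding hpv_def by (rule has_vector_derivative_add)
lemma hpu_diff: "hpu f q a \<Longrightarrow> hpu g q b \<Longrightarrow> hpu (\<lambda>x. f x - g x) q (a - b)"
  unfolding hpu_def by (rule has_vector_derivative_diff)
lemma hpv_diff: "hpv f q a \<Longrightarrow> hpv g q b \<Longrightarrow> hpv (\<lambda>x. f x - g x) q (a - b)"
  unfolding hpv_def by (rule has_vector_derivative_diff)

lemma hpu_of_real: "hpu f q (a::real) \<Longrightarrow> hpu (\<lambda>x. complex_of_real (f x)) q (of_real a)"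
  unfolding hpu_def by (rule has_vector_derivative_of_real) (simp add: has_real_derivative_iff_has_vector_derivative)
lemma hpv_of_real: "hpv f q (a::real) \<Longrightarrow> hpv (\<lambda>x. complex_of_real (f x)) q (of_real a)"
  unfolding hpv_def by (rule has_vector_derivative_of_real) (simp add: has_real_derivative_iff_has_vector_derivative)

lemma hpu_cmult: "hpu f q (a::complex) \<Longrightarrow> hpu (\<lambda>x. c * f x) q (c * a)"
  unfolding hpu_def by (rule has_vector_derivative_mult_right)
lemma hpv_cmult: "hpv f q (a::complex) \<Longrightarrow> hpv (\<lambda>x. c * f x) q (c * a)"
  unfolding hpv_def by (rule has_vector_derivative_mult_right)

lemma hpu_divide: "hpu f q (a::real) \<Longrightarrow> hpu g q b \<Longrightarrow> g q \<noteq> 0 \<Longrightarrow>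
   hpu (\<lambda>x. f x / g x) q ((a * g q - f q * b) / (g q * g q))"
  unfolding hpu_def has_real_derivative_iff_has_vector_derivative[symmetric]
  by (drule (1) DERIV_divide) (cases q, auto)
lemma hpv_divide: "hpv f q (a::real) \<Longrightarrow> hpv g q b \<Longrightarrow> g q \<noteq> 0 \<Longrightarrow>
   hpv (\<lambda>x. f x / g x) q ((a * g q - f q * b) / (g q * g q))"
  unfolding hpv_def has_real_derivative_iff_has_vector_derivative[symmetric]
  by (drule (1) DERIV_divide) (cases q, auto)

lemma hpu_cmultr: "hpu f q (a::real) \<Longrightarrow> hpu (\<lambda>x. c * f x) q (c * a)"
  unfolding hpu_def by (rule has_vector_derivative_mult_right)
lemma hpv_cmultr: "hpv f q (a::real) \<Longrightarrow> hpv (\<lambda>x. c * f x) q (c * a)"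
  unfolding hpv_def by (rule has_vector_derivative_mult_right)

lemma open_slice_u: "open (S::(real\<times>real) set) \<Longrightarrow> open {s. (s, v) \<in> S}"
proof -
  assume "open S"
  have "continuous_on UNIV (\<lambda>s::real. (s, v))" by (intro continuous_intros)
  then have "open ((\<lambda>s::real. (s, v)) -` S)" using \<open>open S\<close> by (simp add: open_vimage)
  then show ?thesis by (simp add: vimage_def)
qed
lemma open_slice_v: "open (S::(real\<times>real) set) \<Longrightarrow> open {t. (u, t) \<in> S}"
proof -
  assume "open S"
  have "continuous_on UNIV (\<lambda>t::real. (u, t))" by (intro continuous_intros)
  then have "open ((\<lambda>t::real. (u, t)) -` S)" using \<open>open S\<close> by (simp add: open_vimage)
  then show ?thesis by (simp add: vimage_def)
qed

lemma hpu_cong: "open S \<Longrightarrow> q \<in> S \<Longrightarrow> (\<And>x. x \<in> S \<Longrightarrow> f x = g x) \<Longrightarrow> hpu f q D \<Longrightarrow> hpu g q D"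
  unfolding hpu_def
proof -
  assume a: "open S" "q \<in> S" "\<And>x. x \<in> S \<Longrightarrow> f x = g x"
    "((\<lambda>s. f (s, snd q)) has_vector_derivative D) (at (fst q))"
  show "((\<lambda>s. g (s, snd q)) has_vector_derivative D) (at (fst q))"
    apply (rule has_vector_derivative_transform_within_open[OF a(4), where S="{s. (s, snd q) \<in> S}"])
    using a by (auto simp: open_slice_u)
qed
lemma hpv_cong: "open S \<Longrightarrow> q \<in> S \<Longrightarrow> (\<And>x. x \<in> S \<Longrightarrow> f x = g x) \<Longrightarrow> hpv f q D \<Longrightarrow> hpv g q D"
  unfolding hpv_def
proof -
  assume a: "open S" "q \<in> S" "\<And>x. x \<in> S \<Longrightarrow> f x = g x"
    "((\<lambda>t. f (fst q, t)) has_vector_derivative D) (at (snd q))"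
  show "((\<lambda>t. g (fst q, t)) has_vector_derivative D) (at (snd q))"
    apply (rule has_vector_derivative_transform_within_open[OF a(4), where S="{t. (fst q, t) \<in> S}"])
    using a by (auto simp: open_slice_v)
qed

lemma hpu_zero: "open S \<Longrightarrow> q \<in> S \<Longrightarrow> (\<And>x. x \<in> S \<Longrightarrow> f x = 0) \<Longrightarrow> hpu f q D \<Longrightarrow> D = 0"
  using hpu_cong[of S q f "\<lambda>x. 0" D] hpu_const[of 0 q]
  by (metis hpu_def vector_derivative_unique_at)
lemma hpv_zero: "open S \<Longrightarrow> q \<in> S \<Longrightarrow> (\<And>x. x \<in> S \<Longrightarrow> f x = 0) \<Longrightarrow> hpv f q D \<Longrightarrow> D = 0"
  using hpv_cong[of S q f "\<lambda>x. 0" D] hpv_const[of 0 q]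
  by (metis hpv_def vector_derivative_unique_at)

lemma pu_cong: "open S \<Longrightarrow> q \<in> S \<Longrightarrow> (\<And>x. x \<in> S \<Longrightarrow> f x = g x) \<Longrightarrow> hpu f q D \<Longrightarrow> pu g q = D"
  by (metis hpu_cong pu_eq)
lemma pv_cong: "open S \<Longrightarrow> q \<in> S \<Longrightarrow> (\<And>x. x \<in> S \<Longrightarrow> f x = g x) \<Longrightarrow> hpv f q D \<Longrightarrow> pv g q = D"
  by (metis hpv_cong pv_eq)


lemma dist_box: "a \<le> x \<Longrightarrow> x \<le> a + t \<Longrightarrow> b \<le> y \<Longrightarrow> y \<le> b + t \<Longrightarrow> t > 0 \<Longrightarrow>
   dist (x, y) (a::real, b::real) < 3 * t"
proof -
  assume h: "a \<le> x" "x \<le> a + t" "b \<le> y" "y \<le> b + t" "t > 0"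
  have "dist (x, y) (a, b) = sqrt ((x - a)^2 + (y - b)^2)"
    by (simp add: dist_Pair_Pair dist_real_def)
  also have "\<dots> \<le> sqrt ((2*t)^2)"
  proof (intro real_sqrt_le_mono)
    have "(x - a) * (x - a) \<le> t * t" using h by (intro mult_mono) auto
    moreover have "(y - b) * (y - b) \<le> t * t" using h by (intro mult_mono) auto
    moreover have "t * t \<ge> 0" by simp
    ultimately show "(x - a)^2 + (y - b)^2 \<le> (2*t)^2" unfolding power2_eq_square by linarith
  qed
  also have "\<dots> = 2 * t" using h by (subst real_sqrt_abs) simp
  finally show ?thesis using h by simp
qed

lemma schwarz_real:
  fixes f fu fv fuv fvu :: "real \<times> real \<Rightarrow> real"
  assumes S: "open S" and ab: "(a, b) \<in> S"
    and du: "\<And>q. q \<in> S \<Longrightarrow> hpu f q (fu q)"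
    and dv: "\<And>q. q \<in> S \<Longrightarrow> hpv f q (fv q)"
    and duv: "\<And>q. q \<in> S \<Longrightarrow> hpv fu q (fuv q)"
    and dvu: "\<And>q. q \<in> S \<Longrightarrow> hpu fv q (fvu q)"
    and c1: "continuous_on S fuv" and c2: "continuous_on S fvu"
  shows "fuv (a, b) = fvu (a, b)"
proof (rule ccontr)
  assume ne: "fuv (a, b) \<noteq> fvu (a, b)"
  define e where "e = \<bar>fuv (a, b) - fvu (a, b)\<bar> / 2"
  have e: "e > 0" using ne by (simp add: e_def)
  obtain d0 where d0: "d0 > 0" "ball (a, b) d0 \<subseteq> S" using S ab open_contains_ball by blast
  have ca1: "continuous (at (a, b)) fuv" using c1 S ab by (simp add: continuous_on_eq_continuous_at)
  have ca2: "continuous (at (a, b)) fvu" using c2 S ab by (simp add: continuous_on_eq_continuous_at)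
  obtain d1 where d1: "d1 > 0" "\<And>x. dist x (a, b) < d1 \<Longrightarrow> dist (fuv x) (fuv (a, b)) < e"
    using ca1 e unfolding continuous_at_eps_delta by blast
  obtain d2 where d2: "d2 > 0" "\<And>x. dist x (a, b) < d2 \<Longrightarrow> dist (fvu x) (fvu (a, b)) < e"
    using ca2 e unfolding continuous_at_eps_delta by blast
  define t where "t = min d0 (min d1 d2) / 3"
  have t: "t > 0" using d0 d1 d2 by (simp add: t_def)
  have inS: "(x, y) \<in> S" if "a \<le> x" "x \<le> a + t" "b \<le> y" "y \<le> b + t" for x y
  proof -
    have "dist (x, y) (a, b) < 3 * t" using dist_box that t by blast
    then have "dist (a, b) (x, y) < d0" by (simp add: t_def dist_commute)
    then show ?thesis using d0 by auto
  qed
  have nr1: "dist (fuv (x, y)) (fuv (a, b)) < e" if "a \<le> x" "x \<le> a + t" "b \<le> y" "y \<le> b + t" for x y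
    using dist_box[OF that t] d1(2) by (simp add: t_def)
  have nr2: "dist (fvu (x, y)) (fvu (a, b)) < e" if "a \<le> x" "x \<le> a + t" "b \<le> y" "y \<le> b + t" for x y
    using dist_box[OF that t] d2(2) by (simp add: t_def)
  define D where "D = f (a + t, b + t) - f (a + t, b) - f (a, b + t) + f (a, b)"
  have "\<exists>z. a < z \<and> z < a + t \<and> (f (a + t, b + t) - f (a + t, b)) - (f (a, b + t) - f (a, b))
      = (a + t - a) * (fu (z, b + t) - fu (z, b))"
  proof (rule MVT2[where f="\<lambda>s. f (s, b + t) - f (s, b)"])
    show "a < a + t" using t by simp
    fix x assume x: "a \<le> x" "x \<le> a + t"
    have "hpu f (x, b + t) (fu (x, b + t))" "hpu f (x, b) (fu (x, b))"
      using du inS x t by auto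
    then show "((\<lambda>s. f (s, b + t) - f (s, b)) has_real_derivative fu (x, b + t) - fu (x, b)) (at x)"
      unfolding has_real_derivative_iff_has_vector_derivative hpu_def
      by (auto intro!: has_vector_derivative_diff)
  qed
  then obtain z where z: "a < z" "z < a + t" "D = t * (fu (z, b + t) - fu (z, b))"
    by (auto simp: D_def algebra_simps)
  have "\<exists>w. b < w \<and> w < b + t \<and> fu (z, b + t) - fu (z, b) = (b + t - b) * fuv (z, w)"
  proof (rule MVT2[where f="\<lambda>r. fu (z, r)"])
    show "b < b + t" using t by simp
    fix y assume y: "b \<le> y" "y \<le> b + t"
    have "hpv fu (z, y) (fuv (z, y))" using duv inS y z by auto
    then show "((\<lambda>r. fu (z, r)) has_real_derivative fuv (z, y)) (at y)"
      unfolding has_real_derivative_iff_has_vector_derivative hpv_def by simp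
  qed
  then obtain w where w: "b < w" "w < b + t" "D = t * t * fuv (z, w)"
    using z by auto
  have "\<exists>z. b < z \<and> z < b + t \<and> (f (a + t, b + t) - f (a, b + t)) - (f (a + t, b) - f (a, b))
      = (b + t - b) * (fv (a + t, z) - fv (a, z))"
  proof (rule MVT2[where f="\<lambda>r. f (a + t, r) - f (a, r)"])
    show "b < b + t" using t by simp
    fix y assume y: "b \<le> y" "y \<le> b + t"
    have "hpv f (a + t, y) (fv (a + t, y))" "hpv f (a, y) (fv (a, y))"
      using dv inS y t by auto
    then show "((\<lambda>r. f (a + t, r) - f (a, r)) has_real_derivative fv (a + t, y) - fv (a, y)) (at y)"
      unfolding has_real_derivative_iff_has_vector_derivative hpv_def
      by (auto intro!: has_vector_derivative_diff)
  qed
  then obtain z' where z': "b < z'" "z' < b + t" "D = t * (fv (a + t, z') - fv (a, z'))"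
    by (auto simp: D_def algebra_simps)
  have "\<exists>w. a < w \<and> w < a + t \<and> fv (a + t, z') - fv (a, z') = (a + t - a) * fvu (w, z')"
  proof (rule MVT2[where f="\<lambda>s. fv (s, z')"])
    show "a < a + t" using t by simp
    fix x assume x: "a \<le> x" "x \<le> a + t"
    have "hpu fv (x, z') (fvu (x, z'))" using dvu inS x z' by auto
    then show "((\<lambda>s. fv (s, z')) has_real_derivative fvu (x, z')) (at x)"
      unfolding has_real_derivative_iff_has_vector_derivative hpu_def by simp
  qed
  then obtain w' where w': "a < w'" "w' < a + t" "D = t * t * fvu (w', z')"
    using z' by auto
  have eq: "fuv (z, w) = fvu (w', z')" using w w' t by simp
  have "dist (fuv (z, w)) (fuv (a, b)) < e" using nr1 z w by simp
  moreover have "dist (fvu (w', z')) (fvu (a, b)) < e" using nr2 w' z' by simp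
  moreover have abs_lem: "\<And>A B C D::real. \<bar>C - A\<bar> < \<bar>A - B\<bar>/2 \<Longrightarrow> \<bar>D - B\<bar> < \<bar>A - B\<bar>/2 \<Longrightarrow> C = D \<Longrightarrow> False"
    by (auto simp: abs_if split: if_splits)
  ultimately show False using eq unfolding dist_real_def e_def by blast
qed

lemma Ck2_unfold: "Ck 2 f S \<Longrightarrow> Ck (Suc (Suc 0)) f S" by (simp add: numeral_2_eq_2)

lemma schwarz:
  fixes f :: "real \<times> real \<Rightarrow> 'a::real_inner"
  assumes S: "open S" and C: "Ck 2 f S" and q: "q \<in> S"
  shows "pv (pu f) q = pu (pv f) q"
proof -
  have C2: "Ck (Suc (Suc 0)) f S" using C by (simp add: numeral_2_eq_2)
  have Cu: "Ck (Suc 0) (pu f) S" and Cv: "Ck (Suc 0) (pv f) S" using C2 by auto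
  define c where "c = pv (pu f) q - pu (pv f) q"
  obtain a b where ab: "q = (a, b)" by (cases q)
  have "(\<lambda>x. pv (pu f) x \<bullet> c) (a, b) = (\<lambda>x. pu (pv f) x \<bullet> c) (a, b)"
  proof (rule schwarz_real[OF S, where f="\<lambda>x. f x \<bullet> c" and fu="\<lambda>x. pu f x \<bullet> c" and fv="\<lambda>x. pv f x \<bullet> c"])
    show "(a, b) \<in> S" using q ab by simp
    fix x assume x: "x \<in> S"
    show "hpu (\<lambda>x. f x \<bullet> c) x (pu f x \<bullet> c)"
      using hpu_inner[OF Ck_hpu[OF C2 x] hpu_const[of c]] by simp
    show "hpv (\<lambda>x. f x \<bullet> c) x (pv f x \<bullet> c)"
      using hpv_inner[OF Ck_hpv[OF C2 x] hpv_const[of c]] by simp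
    show "hpv (\<lambda>x. pu f x \<bullet> c) x (pv (pu f) x \<bullet> c)"
      using hpv_inner[OF Ck_hpv[OF Cu x] hpv_const[of c]] by simp
    show "hpu (\<lambda>x. pv f x \<bullet> c) x (pu (pv f) x \<bullet> c)"
      using hpu_inner[OF Ck_hpu[OF Cv x] hpu_const[of c]] by simp
  next
    have "continuous_on S (pv (pu f))" "continuous_on S (pu (pv f))" using Cu Cv by auto
    then show "continuous_on S (\<lambda>x. pv (pu f) x \<bullet> c)" "continuous_on S (\<lambda>x. pu (pv f) x \<bullet> c)"
      by (auto intro!: continuous_intros)
  qed
  then have "c \<bullet> c = 0" using ab by (simp add: c_def inner_diff_left)
  then show ?thesis by (simp add: c_def)
qed


lemma parseval:
  fixes A B Y Z :: "real^'n" and N :: "nat \<Rightarrow> real^'n"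
  assumes n3: "CARD('n) \<ge> 2"
    and W: "W > 0" and AA: "A \<bullet> A = W" and BB: "B \<bullet> B = W" and AB: "A \<bullet> B = 0"
    and NA: "\<And>\<omega>. \<omega> \<in> {1..CARD('n) - 2} \<Longrightarrow> N \<omega> \<bullet> A = 0"
    and NB: "\<And>\<omega>. \<omega> \<in> {1..CARD('n) - 2} \<Longrightarrow> N \<omega> \<bullet> B = 0"
    and NN: "\<And>\<sigma> \<omega>. \<sigma> \<in> {1..CARD('n) - 2} \<Longrightarrow> \<omega> \<in> {1..CARD('n) - 2} \<Longrightarrow>
               N \<sigma> \<bullet> N \<omega> = (if \<sigma> = \<omega> then 1 else 0)"
  shows "Y \<bullet> Z = (Y \<bullet> A) * (Z \<bullet> A) / W + (Y \<bullet> B) * (Z \<bullet> B) / W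
           + (\<Sum>\<omega>=1..CARD('n) - 2. (Y \<bullet> N \<omega>) * (Z \<bullet> N \<omega>))"
proof -
  define m where "m = CARD('n) - 2"
  define I where "I = {1..m}"
  define E where "E = insert A (insert B (N ` I))"
  have NA': "\<And>\<omega>. \<omega> \<in> I \<Longrightarrow> N \<omega> \<bullet> A = 0" and NB': "\<And>\<omega>. \<omega> \<in> I \<Longrightarrow> N \<omega> \<bullet> B = 0"
    and NN': "\<And>\<sigma> \<omega>. \<sigma> \<in> I \<Longrightarrow> \<omega> \<in> I \<Longrightarrow> N \<sigma> \<bullet> N \<omega> = (if \<sigma> = \<omega> then 1 else 0)"
    using NA NB NN by (auto simp: I_def m_def)
  have inj: "inj_on N I"
  proof (rule inj_onI)
    fix x y assume "x \<in> I" "y \<in> I" "N x = N y"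
    then show "x = y" using NN'[of x y] NN'[of x x] by (auto split: if_splits)
  qed
  have Anot: "A \<notin> insert B (N ` I)"
  proof
    assume "A \<in> insert B (N ` I)"
    then show False using AB AA W NA' by (auto simp: inner_commute)
  qed
  have Bnot: "B \<notin> N ` I"
  proof
    assume "B \<in> N ` I"
    then show False using BB W NB' by (auto simp: inner_commute)
  qed
  have cardE: "card E = CARD('n)"
    using Anot Bnot inj n3 by (simp add: E_def card_insert_disjoint card_image I_def m_def)
  have finE: "finite E" by (simp add: E_def I_def)
  have orth: "\<And>x y. x \<in> E \<Longrightarrow> y \<in> E \<Longrightarrow> x \<noteq> y \<Longrightarrow> x \<bullet> y = 0"
    unfolding E_def using AB NA' NB' NN' by (auto simp: inner_commute)
  have nz: "0 \<notin> E"
  proof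
    assume "0 \<in> E"
    then show False unfolding E_def using AA BB W NN' by (auto, metis inner_zero_left zero_neq_one)
  qed
  have indep: "independent E"
    by (rule pairwise_orthogonal_independent) (use orth nz in \<open>auto simp: pairwise_def orthogonal_def\<close>)
  have spanE: "UNIV \<subseteq> span E"
    using card_eq_dim[of E UNIV] cardE finE indep by simp
  define P where "P = (Y \<bullet> A / W) *\<^sub>R A + (Y \<bullet> B / W) *\<^sub>R B + (\<Sum>\<omega>\<in>I. (Y \<bullet> N \<omega>) *\<^sub>R N \<omega>)"
  define R where "R = Y - P"
  have sumd: "\<And>\<sigma>. \<sigma> \<in> I \<Longrightarrow> (\<Sum>\<omega>\<in>I. (Y \<bullet> N \<omega>) * (N \<omega> \<bullet> N \<sigma>)) = Y \<bullet> N \<sigma>"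
  proof -
    fix \<sigma> assume s: "\<sigma> \<in> I"
    have "(\<Sum>\<omega>\<in>I. (Y \<bullet> N \<omega>) * (N \<omega> \<bullet> N \<sigma>)) = (\<Sum>\<omega>\<in>I. if \<omega> = \<sigma> then Y \<bullet> N \<omega> else 0)"
      by (rule sum.cong) (use NN' s in auto)
    also have "\<dots> = Y \<bullet> N \<sigma>" using s by (simp add: I_def)
    finally show "(\<Sum>\<omega>\<in>I. (Y \<bullet> N \<omega>) * (N \<omega> \<bullet> N \<sigma>)) = Y \<bullet> N \<sigma>" .
  qed
  have RE: "\<And>e. e \<in> E \<Longrightarrow> orthogonal R e"
  proof -
    fix e assume e: "e \<in> E"
    have sA: "(\<Sum>\<omega>\<in>I. (Y \<bullet> N \<omega>) * (N \<omega> \<bullet> A)) = 0" using NA' by simp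
    have sB: "(\<Sum>\<omega>\<in>I. (Y \<bullet> N \<omega>) * (N \<omega> \<bullet> B)) = 0" using NB' by simp
    have "R \<bullet> e = 0"
      using e unfolding E_def
    proof (elim insertE imageE)
      assume "e = A"
      have BA: "B \<bullet> A = 0" using AB by (simp add: inner_commute)
      then show "R \<bullet> e = 0" using W AA \<open>e = A\<close> sA
        by (simp add: R_def P_def inner_diff_left inner_add_left inner_sum_left)
    next
      assume "e = B"
      then show "R \<bullet> e = 0" using W BB AB sB
        by (simp add: R_def P_def inner_diff_left inner_add_left inner_sum_left)
    next
      fix \<sigma> assume "e = N \<sigma>" "\<sigma> \<in> I"
      then show "R \<bullet> e = 0" using sumd[of \<sigma>] NA'[of \<sigma>] NB'[of \<sigma>]
        by (simp add: R_def P_def inner_diff_left inner_add_left inner_sum_left inner_commute[of A] inner_commute[of B])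
    qed
    then show "orthogonal R e" by (simp add: orthogonal_def)
  qed
  have "R \<in> span E" using spanE by auto
  then have "orthogonal R R" using orthogonal_to_span[of R E R] RE by (simp add: orthogonal_commute)
  then have "R = 0" by (simp add: orthogonal_def)
  then have YP: "Y = P" by (simp add: R_def)
  have "Z \<bullet> P = (Y \<bullet> A) * (Z \<bullet> A) / W + (Y \<bullet> B) * (Z \<bullet> B) / W
           + (\<Sum>\<omega>=1..CARD('n) - 2. (Y \<bullet> N \<omega>) * (Z \<bullet> N \<omega>))"
    by (simp add: P_def inner_add_right inner_sum_right I_def m_def)
  then show ?thesis using YP by (simp add: inner_commute)
qed


lemma Ck_Suc_mono: "Ck (Suc k) f S \<Longrightarrow> Ck k f S"
proof (induction k arbitrary: f)
  case 0 then show ?case by simp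
next
  case (Suc k)
  have h: "continuous_on S f" "\<forall>p\<in>S. (\<lambda>s. f (s, snd p)) differentiable (at (fst p)) \<and>
              (\<lambda>t. f (fst p, t)) differentiable (at (snd p))"
     "Ck (Suc k) (pu f) S" "Ck (Suc k) (pv f) S"
    using Suc.prems unfolding Ck.simps(2)[of "Suc k"] by blast+
  have "Ck k (pu f) S" "Ck k (pv f) S" using Suc.IH h(3,4) by blast+
  then show ?case using h(1,2) unfolding Ck.simps(2)[of k] by blast
qed

lemma sff11: "sff X N s 1 1 = (\<lambda>q. pu (pu X) q \<bullet> N s q)" by (auto simp: sff_def pd_def)
lemma sff12: "sff X N s 1 2 = (\<lambda>q. pu (pv X) q \<bullet> N s q)" by (auto simp: sff_def pd_def)
lemma sff21: "sff X N s 2 1 = (\<lambda>q. pv (pu X) q \<bullet> N s q)" by (auto simp: sff_def pd_def)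
lemma sff22: "sff X N s 2 2 = (\<lambda>q. pv (pv X) q \<bullet> N s q)" by (auto simp: sff_def pd_def)
lemma tor1: "torsion N s w 1 q = (if s = w then 0 else pu (N s) q \<bullet> N w q)" by (simp add: torsion_def pd_def)
lemma tor2: "torsion N s w 2 q = (if s = w then 0 else pv (N s) q \<bullet> N w q)" by (simp add: torsion_def pd_def)
lemma areaW_fun: "areaW X = (\<lambda>q. pu X q \<bullet> pu X q)" by (auto simp: areaW_def)

lemma Ck_hpu': "Ck k f S \<Longrightarrow> 0 < k \<Longrightarrow> q \<in> S \<Longrightarrow> hpu f q (pu f q)"
  by (cases k) (auto intro: Ck_hpu)
lemma Ck_hpv': "Ck k f S \<Longrightarrow> 0 < k \<Longrightarrow> q \<in> S \<Longrightarrow> hpv f q (pv f q)"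
  by (cases k) (auto intro: Ck_hpv)
lemma Ck_parts: "Ck k f S \<Longrightarrow> 0 < k \<Longrightarrow> Ck (k - 1) (pu f) S \<and> Ck (k - 1) (pv f) S"
  by (cases k) auto
lemma hopf_fun: "hopf X N s = (\<lambda>q. complex_of_real (sff X N s 1 1 q - sff X N s 2 2 q)
                    - 2 * \<i> * complex_of_real (sff X N s 1 2 q))"
  by (auto simp: hopf_def)
lemma meanH_fun: "meanH X N s = (\<lambda>q. (sff X N s 1 1 q + sff X N s 2 2 q) / (2 * areaW X q))"
  by (auto simp: meanH_def)


theorem mainTheorem7:
  fixes X :: "real \<times> real \<Rightarrow> real^'n"
    and N :: "nat \<Rightarrow> real \<times> real \<Rightarrow> real^'n"
  assumes n3: "CARD('n) \<ge> 3"
    and X_C3: "Ck 3 X (ball (0,0) 1)"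
    and conf1: "\<And>p. p \<in> ball (0,0) 1 \<Longrightarrow> pv X p \<bullet> pv X p = areaW X p"
    and conf2: "\<And>p. p \<in> ball (0,0) 1 \<Longrightarrow> pu X p \<bullet> pv X p = 0"
    and immersion: "\<And>p. p \<in> ball (0,0) 1 \<Longrightarrow> areaW X p > 0"
    and N_C2: "\<And>\<sigma>. \<sigma> \<in> {1..CARD('n) - 2} \<Longrightarrow> Ck 2 (N \<sigma>) (ball (0,0) 1)"
    and N_normal: "\<And>\<sigma> p. \<sigma> \<in> {1..CARD('n) - 2} \<Longrightarrow> p \<in> ball (0,0) 1 \<Longrightarrow>
                      N \<sigma> p \<bullet> pu X p = 0 \<and> N \<sigma> p \<bullet> pv X p = 0"
    and N_orthonormal: "\<And>\<sigma> \<omega> p. \<sigma> \<in> {1..CARD('n) - 2} \<Longrightarrow> \<omega> \<in> {1..CARD('n) - 2} \<Longrightarrow>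
                      p \<in> ball (0,0) 1 \<Longrightarrow> N \<sigma> p \<bullet> N \<omega> p = (if \<sigma> = \<omega> then 1 else 0)"
    and \<sigma>: "\<sigma> \<in> {1..CARD('n) - 2}"
    and p: "p \<in> ball (0,0) 1"
  shows "dwbar (hopf X N \<sigma>) p =
           2 * dw (\<lambda>q. complex_of_real (meanH X N \<sigma> q)) p * complex_of_real (areaW X p)
         + (\<Sum>\<omega>=1..CARD('n) - 2.
              (complex_of_real (sff X N \<omega> 2 2 p) + \<i> * complex_of_real (sff X N \<omega> 1 2 p))
                 * complex_of_real (torsion N \<omega> \<sigma> 1 p)
            - (complex_of_real (sff X N \<omega> 2 1 p) + \<i> * complex_of_real (sff X N \<omega> 1 1 p))
                 * complex_of_real (torsion N \<omega> \<sigma> 2 p))"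
proof -
  define S where "S = ball ((0::real), (0::real)) 1"
  define I where "I = {1..CARD('n) - 2}"
  have oS: "open S" by (simp add: S_def)
  have pS: "p \<in> S" using p by (simp add: S_def)
  have sI: "\<sigma> \<in> I" using \<sigma> by (simp add: I_def)
  have C3: "Ck 3 X S" using X_C3 by (simp add: S_def)
  have C2: "Ck 2 X S" using Ck_Suc_mono[of 2 X S] C3 by (simp add: numeral_3_eq_3 numeral_2_eq_2)
  have CA: "Ck 2 (pu X) S" and CB: "Ck 2 (pv X) S" using Ck_parts[OF C3] by simp_all
  have CA1: "Ck 1 (pu (pu X)) S" and CA2: "Ck 1 (pv (pu X)) S" using Ck_parts[OF CA] by simp_all
  have CB1: "Ck 1 (pu (pv X)) S" and CB2: "Ck 1 (pv (pv X)) S" using Ck_parts[OF CB] by simp_all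
  have CN: "\<And>w. w \<in> I \<Longrightarrow> Ck 2 (N w) S" using N_C2 by (simp add: S_def I_def)
  have NN: "\<And>s w q. s \<in> I \<Longrightarrow> w \<in> I \<Longrightarrow> q \<in> S \<Longrightarrow> N s q \<bullet> N w q = (if s = w then 1 else 0)"
    using N_orthonormal by (simp add: S_def I_def)
  have NA: "\<And>s q. s \<in> I \<Longrightarrow> q \<in> S \<Longrightarrow> N s q \<bullet> pu X q = 0"
    and NB: "\<And>s q. s \<in> I \<Longrightarrow> q \<in> S \<Longrightarrow> N s q \<bullet> pv X q = 0"
    using N_normal by (simp_all add: S_def I_def)
  have cf1: "\<And>q. q \<in> S \<Longrightarrow> pv X q \<bullet> pv X q = pu X q \<bullet> pu X q"
    using conf1 by (simp add: S_def areaW_def)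
  have cf2: "\<And>q. q \<in> S \<Longrightarrow> pu X q \<bullet> pv X q = 0" using conf2 by (simp add: S_def)
  have Wpos: "areaW X p > 0" using immersion p by simp
  have hAu: "hpu (pu X) p (pu (pu X) p)" and hAv: "hpv (pu X) p (pv (pu X) p)"
    using Ck_hpu'[OF CA _ pS] Ck_hpv'[OF CA _ pS] by simp_all
  have hBu: "hpu (pv X) p (pu (pv X) p)" and hBv: "hpv (pv X) p (pv (pv X) p)"
    using Ck_hpu'[OF CB _ pS] Ck_hpv'[OF CB _ pS] by simp_all
  have hA1u: "hpu (pu (pu X)) p (pu (pu (pu X)) p)" and hA1v: "hpv (pu (pu X)) p (pv (pu (pu X)) p)"
    using Ck_hpu'[OF CA1 _ pS] Ck_hpv'[OF CA1 _ pS] by simp_all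
  have hB1u: "hpu (pu (pv X)) p (pu (pu (pv X)) p)" and hB1v: "hpv (pu (pv X)) p (pv (pu (pv X)) p)"
    using Ck_hpu'[OF CB1 _ pS] Ck_hpv'[OF CB1 _ pS] by simp_all
  have hB2u: "hpu (pv (pv X)) p (pu (pv (pv X)) p)" and hB2v: "hpv (pv (pv X)) p (pv (pv (pv X)) p)"
    using Ck_hpu'[OF CB2 _ pS] Ck_hpv'[OF CB2 _ pS] by simp_all
  have hNu: "\<And>w. w \<in> I \<Longrightarrow> hpu (N w) p (pu (N w) p)" and hNv: "\<And>w. w \<in> I \<Longrightarrow> hpv (N w) p (pv (N w) p)"
    using Ck_hpu'[OF CN _ pS] Ck_hpv'[OF CN _ pS] by simp_all
  have s0: "\<And>q. q \<in> S \<Longrightarrow> pv (pu X) q = pu (pv X) q" using schwarz[OF oS C2] by blast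
  have s1: "pv (pu (pu X)) p = pu (pv (pu X)) p" using schwarz[OF oS CA pS] .
  have s2: "pv (pu (pv X)) p = pu (pv (pv X)) p" using schwarz[OF oS CB pS] .
  have s3: "pu (pv (pu X)) p = pu (pu (pv X)) p"
    by (rule pu_cong[OF oS pS _ hB1u]) (simp add: s0)
  have s0p: "pv (pu X) p = pu (pv X) p" using s0 pS by blast
  have i1: "pu (pv X) p \<bullet> pv X p + pv X p \<bullet> pu (pv X) p - (pu (pu X) p \<bullet> pu X p + pu X p \<bullet> pu (pu X) p) = 0"
    by (rule hpu_zero[OF oS pS _ hpu_diff[OF hpu_inner[OF hBu hBu] hpu_inner[OF hAu hAu]]]) (simp add: cf1)
  have i2: "pv (pv X) p \<bullet> pv X p + pv X p \<bullet> pv (pv X) p - (pv (pu X) p \<bullet> pu X p + pu X p \<bullet> pv (pu X) p) = 0"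
    by (rule hpv_zero[OF oS pS _ hpv_diff[OF hpv_inner[OF hBv hBv] hpv_inner[OF hAv hAv]]]) (simp add: cf1)
  have i3: "pu (pu X) p \<bullet> pv X p + pu X p \<bullet> pu (pv X) p = 0"
    by (rule hpu_zero[OF oS pS _ hpu_inner[OF hAu hBu]]) (simp add: cf2)
  have i4: "pv (pu X) p \<bullet> pv X p + pu X p \<bullet> pv (pv X) p = 0"
    by (rule hpv_zero[OF oS pS _ hpv_inner[OF hAv hBv]]) (simp add: cf2)
  have i5: "pu (N \<sigma>) p \<bullet> pu X p + N \<sigma> p \<bullet> pu (pu X) p = 0"
    by (rule hpu_zero[OF oS pS _ hpu_inner[OF hNu[OF sI] hAu]]) (simp add: NA sI)
  have i6: "pv (N \<sigma>) p \<bullet> pu X p + N \<sigma> p \<bullet> pv (pu X) p = 0"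
    by (rule hpv_zero[OF oS pS _ hpv_inner[OF hNv[OF sI] hAv]]) (simp add: NA sI)
  have i7: "pu (N \<sigma>) p \<bullet> pv X p + N \<sigma> p \<bullet> pu (pv X) p = 0"
    by (rule hpu_zero[OF oS pS _ hpu_inner[OF hNu[OF sI] hBu]]) (simp add: NB sI)
  have i8: "pv (N \<sigma>) p \<bullet> pv X p + N \<sigma> p \<bullet> pv (pv X) p = 0"
    by (rule hpv_zero[OF oS pS _ hpv_inner[OF hNv[OF sI] hBv]]) (simp add: NB sI)
  have i9: "\<And>w s. w \<in> I \<Longrightarrow> s \<in> I \<Longrightarrow> pu (N w) p \<bullet> N s p + N w p \<bullet> pu (N s) p - 0 = 0"
    by (rule hpu_zero[OF oS pS _ hpu_diff[OF hpu_inner[OF hNu hNu] hpu_const]]) (simp_all add: NN)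
  have i10: "\<And>w s. w \<in> I \<Longrightarrow> s \<in> I \<Longrightarrow> pv (N w) p \<bullet> N s p + N w p \<bullet> pv (N s) p - 0 = 0"
    by (rule hpv_zero[OF oS pS _ hpv_diff[OF hpv_inner[OF hNv hNv] hpv_const]]) (simp_all add: NN)
  have hL11u: "hpu (sff X N \<sigma> 1 1) p (pu (pu (pu X)) p \<bullet> N \<sigma> p + pu (pu X) p \<bullet> pu (N \<sigma>) p)"
    unfolding sff11 by (rule hpu_inner[OF hA1u hNu[OF sI]])
  have hL11v: "hpv (sff X N \<sigma> 1 1) p (pv (pu (pu X)) p \<bullet> N \<sigma> p + pu (pu X) p \<bullet> pv (N \<sigma>) p)"
    unfolding sff11 by (rule hpv_inner[OF hA1v hNv[OF sI]])
  have hL22u: "hpu (sff X N \<sigma> 2 2) p (pu (pv (pv X)) p \<bullet> N \<sigma> p + pv (pv X) p \<bullet> pu (N \<sigma>) p)"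
    unfolding sff22 by (rule hpu_inner[OF hB2u hNu[OF sI]])
  have hL22v: "hpv (sff X N \<sigma> 2 2) p (pv (pv (pv X)) p \<bullet> N \<sigma> p + pv (pv X) p \<bullet> pv (N \<sigma>) p)"
    unfolding sff22 by (rule hpv_inner[OF hB2v hNv[OF sI]])
  have hL12u: "hpu (sff X N \<sigma> 1 2) p (pu (pu (pv X)) p \<bullet> N \<sigma> p + pu (pv X) p \<bullet> pu (N \<sigma>) p)"
    unfolding sff12 by (rule hpu_inner[OF hB1u hNu[OF sI]])
  have hL12v: "hpv (sff X N \<sigma> 1 2) p (pv (pu (pv X)) p \<bullet> N \<sigma> p + pu (pv X) p \<bullet> pv (N \<sigma>) p)"
    unfolding sff12 by (rule hpv_inner[OF hB1v hNv[OF sI]])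
  have hWu: "hpu (areaW X) p (pu (pu X) p \<bullet> pu X p + pu X p \<bullet> pu (pu X) p)"
    unfolding areaW_fun by (rule hpu_inner[OF hAu hAu])
  have hWv: "hpv (areaW X) p (pv (pu X) p \<bullet> pu X p + pu X p \<bullet> pv (pu X) p)"
    unfolding areaW_fun by (rule hpv_inner[OF hAv hAv])
  define W where "W = areaW X p"
  define l11 where "l11 = sff X N \<sigma> 1 1 p"
  define l12 where "l12 = sff X N \<sigma> 1 2 p"
  define l21 where "l21 = sff X N \<sigma> 2 1 p"
  define l22 where "l22 = sff X N \<sigma> 2 2 p"
  define Lu11 where "Lu11 = pu (pu (pu X)) p \<bullet> N \<sigma> p + pu (pu X) p \<bullet> pu (N \<sigma>) p"
  define Lv11 where "Lv11 = pv (pu (pu X)) p \<bullet> N \<sigma> p + pu (pu X) p \<bullet> pv (N \<sigma>) p"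
  define Lu22 where "Lu22 = pu (pv (pv X)) p \<bullet> N \<sigma> p + pv (pv X) p \<bullet> pu (N \<sigma>) p"
  define Lv22 where "Lv22 = pv (pv (pv X)) p \<bullet> N \<sigma> p + pv (pv X) p \<bullet> pv (N \<sigma>) p"
  define Lu12 where "Lu12 = pu (pu (pv X)) p \<bullet> N \<sigma> p + pu (pv X) p \<bullet> pu (N \<sigma>) p"
  define Lv12 where "Lv12 = pv (pu (pv X)) p \<bullet> N \<sigma> p + pu (pv X) p \<bullet> pv (N \<sigma>) p"
  define Wu where "Wu = pu (pu X) p \<bullet> pu X p + pu X p \<bullet> pu (pu X) p"
  define Wv where "Wv = pv (pu X) p \<bullet> pu X p + pu X p \<bullet> pv (pu X) p"
  have W0: "W \<noteq> 0" using Wpos by (simp add: W_def)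
  have hHu: "hpu (meanH X N \<sigma>) p (((Lu11 + Lu22) * (2 * W) - (l11 + l22) * (2 * Wu)) / ((2 * W) * (2 * W)))"
    unfolding meanH_fun
    using hpu_divide[OF hpu_add[OF hL11u hL22u] hpu_cmultr[OF hWu, of 2]] W0
    by (simp add: W_def l11_def l22_def Lu11_def Lu22_def Wu_def)
  have hHv: "hpv (meanH X N \<sigma>) p (((Lv11 + Lv22) * (2 * W) - (l11 + l22) * (2 * Wv)) / ((2 * W) * (2 * W)))"
    unfolding meanH_fun
    using hpv_divide[OF hpv_add[OF hL11v hL22v] hpv_cmultr[OF hWv, of 2]] W0
    by (simp add: W_def l11_def l22_def Lv11_def Lv22_def Wv_def)
  have dHu: "pu (\<lambda>q. complex_of_real (meanH X N \<sigma> q)) p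
       = of_real (((Lu11 + Lu22) * (2 * W) - (l11 + l22) * (2 * Wu)) / ((2 * W) * (2 * W)))"
    by (rule pu_eq[OF hpu_of_real[OF hHu]])
  have dHv: "pv (\<lambda>q. complex_of_real (meanH X N \<sigma> q)) p
       = of_real (((Lv11 + Lv22) * (2 * W) - (l11 + l22) * (2 * Wv)) / ((2 * W) * (2 * W)))"
    by (rule pv_eq[OF hpv_of_real[OF hHv]])
  have dhu: "pu (hopf X N \<sigma>) p = of_real (Lu11 - Lu22) - 2 * \<i> * of_real Lu12"
    unfolding hopf_fun Lu11_def Lu22_def Lu12_def
    by (rule pu_eq) (intro hpu_diff hpu_of_real hpu_cmult hL11u hL22u hL12u)
  have dhv: "pv (hopf X N \<sigma>) p = of_real (Lv11 - Lv22) - 2 * \<i> * of_real Lv12"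
    unfolding hopf_fun Lv11_def Lv22_def Lv12_def
    by (rule pv_eq) (intro hpv_diff hpv_of_real hpv_cmult hL11v hL22v hL12v)
  have n2: "CARD('n) \<ge> 2" using n3 by simp
  have PV: "\<And>Y Z. Y \<bullet> Z = (Y \<bullet> pu X p) * (Z \<bullet> pu X p) / W + (Y \<bullet> pv X p) * (Z \<bullet> pv X p) / W
      + (\<Sum>\<omega>\<in>I. (Y \<bullet> N \<omega> p) * (Z \<bullet> N \<omega> p))"
    unfolding I_def
  proof (rule parseval[OF n2])
    show "0 < W" using Wpos by (simp add: W_def)
    show "pu X p \<bullet> pu X p = W" by (simp add: W_def areaW_def)
    show "pv X p \<bullet> pv X p = W" using cf1[OF pS] by (simp add: W_def areaW_def)
    show "pu X p \<bullet> pv X p = 0" using cf2[OF pS] .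
    show "\<And>\<omega>. \<omega> \<in> {1..CARD('n) - 2} \<Longrightarrow> N \<omega> p \<bullet> pu X p = 0" using NA pS by (simp add: I_def)
    show "\<And>\<omega>. \<omega> \<in> {1..CARD('n) - 2} \<Longrightarrow> N \<omega> p \<bullet> pv X p = 0" using NB pS by (simp add: I_def)
    show "\<And>s w. s \<in> {1..CARD('n) - 2} \<Longrightarrow> w \<in> {1..CARD('n) - 2} \<Longrightarrow> N s p \<bullet> N w p = (if s = w then 1 else 0)"
      using NN pS by (simp add: I_def)
  qed
  have tu: "\<And>w. w \<in> I \<Longrightarrow> pu (N \<sigma>) p \<bullet> N w p = torsion N \<sigma> w 1 p"
  proof -
    fix w assume w: "w \<in> I"
    show "pu (N \<sigma>) p \<bullet> N w p = torsion N \<sigma> w 1 p"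
    proof (cases "w = \<sigma>")
      case True
      then show ?thesis using i9[OF sI sI] by (simp add: torsion_def pd_def inner_commute)
    qed (simp add: torsion_def pd_def)
  qed
  have tv: "\<And>w. w \<in> I \<Longrightarrow> pv (N \<sigma>) p \<bullet> N w p = torsion N \<sigma> w 2 p"
  proof -
    fix w assume w: "w \<in> I"
    show "pv (N \<sigma>) p \<bullet> N w p = torsion N \<sigma> w 2 p"
    proof (cases "w = \<sigma>")
      case True
      then show ?thesis using i10[OF sI sI] by (simp add: tor2 inner_commute)
    qed (simp add: tor2)
  qed
  define S1 where "S1 = (\<Sum>\<omega>\<in>I. sff X N \<omega> 1 2 p * torsion N \<sigma> \<omega> 2 p)"
  define S2 where "S2 = (\<Sum>\<omega>\<in>I. sff X N \<omega> 2 2 p * torsion N \<sigma> \<omega> 1 p)"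
  define S3 where "S3 = (\<Sum>\<omega>\<in>I. sff X N \<omega> 1 1 p * torsion N \<sigma> \<omega> 2 p)"
  define S4 where "S4 = (\<Sum>\<omega>\<in>I. sff X N \<omega> 1 2 p * torsion N \<sigma> \<omega> 1 p)"
  have P1: "pu (pv X) p \<bullet> pv (N \<sigma>) p = (pu (pv X) p \<bullet> pu X p) * (pv (N \<sigma>) p \<bullet> pu X p) / W
      + (pu (pv X) p \<bullet> pv X p) * (pv (N \<sigma>) p \<bullet> pv X p) / W + S1"
    unfolding PV[of "pu (pv X) p" "pv (N \<sigma>) p"] S1_def by (simp add: tv sff_def pd_def)
  have P2: "pv (pv X) p \<bullet> pu (N \<sigma>) p = (pv (pv X) p \<bullet> pu X p) * (pu (N \<sigma>) p \<bullet> pu X p) / W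
      + (pv (pv X) p \<bullet> pv X p) * (pu (N \<sigma>) p \<bullet> pv X p) / W + S2"
    unfolding PV[of "pv (pv X) p" "pu (N \<sigma>) p"] S2_def by (simp add: tu sff22)
  have P3: "pu (pu X) p \<bullet> pv (N \<sigma>) p = (pu (pu X) p \<bullet> pu X p) * (pv (N \<sigma>) p \<bullet> pu X p) / W
      + (pu (pu X) p \<bullet> pv X p) * (pv (N \<sigma>) p \<bullet> pv X p) / W + S3"
    unfolding PV[of "pu (pu X) p" "pv (N \<sigma>) p"] S3_def by (simp add: tv sff_def pd_def)
  have P4: "pu (pv X) p \<bullet> pu (N \<sigma>) p = (pu (pv X) p \<bullet> pu X p) * (pu (N \<sigma>) p \<bullet> pu X p) / W
      + (pu (pv X) p \<bullet> pv X p) * (pu (N \<sigma>) p \<bullet> pv X p) / W + S4"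
    unfolding PV[of "pu (pv X) p" "pu (N \<sigma>) p"] S4_def by (simp add: tu sff_def pd_def)
  define a1a where "a1a = pu (pu X) p \<bullet> pu X p"
  define a2a where "a2a = pv (pu X) p \<bullet> pu X p"
  have Wu2: "Wu = 2 * a1a" by (simp add: Wu_def a1a_def inner_commute)
  have Wv2: "Wv = 2 * a2a" by (simp add: Wv_def a2a_def inner_commute)
  have b1a: "pu (pv X) p \<bullet> pu X p = a2a" using s0p by (simp add: a2a_def)
  have b1b: "pu (pv X) p \<bullet> pv X p = a1a" using i1 by (simp add: a1a_def inner_commute)
  have b2a: "pv (pv X) p \<bullet> pu X p = - a1a"
    using i4 s0p b1b by (simp add: inner_commute, (metis add.commute add_eq_0_iff inner_commute)?)
  have b2b: "pv (pv X) p \<bullet> pv X p = a2a" using i2 by (simp add: a2a_def inner_commute)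
  have a1b: "pu (pu X) p \<bullet> pv X p = - a2a"
    using i3 s0p by (simp add: a2a_def inner_commute, (metis add.commute add_eq_0_iff inner_commute)?)
  have nvA: "pv (N \<sigma>) p \<bullet> pu X p = - l12"
    using i6 s0p by (simp add: l12_def sff_def pd_def inner_commute, (metis add.commute add_eq_0_iff inner_commute)?)
  have nvB: "pv (N \<sigma>) p \<bullet> pv X p = - l22"
    using i8 by (simp add: l22_def sff_def pd_def inner_commute, (metis add.commute add_eq_0_iff inner_commute)?)
  have nuA: "pu (N \<sigma>) p \<bullet> pu X p = - l11"
    using i5 by (simp add: l11_def sff_def pd_def inner_commute, (metis add.commute add_eq_0_iff inner_commute)?)
  have nuB: "pu (N \<sigma>) p \<bullet> pv X p = - l12"
    using i7 by (simp add: l12_def sff_def pd_def inner_commute, (metis add.commute add_eq_0_iff inner_commute)?)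
  have l21: "l21 = l12" using s0p by (simp add: l21_def l12_def sff_def pd_def)
  have R: "Lv12 - Lu22 = - a1a * (l11 + l22) / W + S1 - S2"
  proof -
    have "Lv12 - Lu22 = pu (pv X) p \<bullet> pv (N \<sigma>) p - pv (pv X) p \<bullet> pu (N \<sigma>) p"
      using s2 by (simp add: Lv12_def Lu22_def)
    also have "\<dots> = - a1a * (l11 + l22) / W + S1 - S2"
      unfolding P1 P2 b1a b1b b2a b2b nvA nvB nuA nuB using W0 by (simp add: field_simps)
    finally show ?thesis .
  qed
  have Iq: "Lv11 - Lu12 = a2a * (l11 + l22) / W + S3 - S4"
  proof -
    have "Lv11 - Lu12 = pu (pu X) p \<bullet> pv (N \<sigma>) p - pu (pv X) p \<bullet> pu (N \<sigma>) p"
      using s1 s3 by (simp add: Lv11_def Lu12_def)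
    also have "\<dots> = a2a * (l11 + l22) / W + S3 - S4"
      unfolding P3 P4 b1a b1b a1b nvA nvB nuA nuB a1a_def[symmetric] using W0 by (simp add: field_simps)
    finally show ?thesis .
  qed
  have anti1: "\<And>w. w \<in> I \<Longrightarrow> torsion N w \<sigma> 1 p = - torsion N \<sigma> w 1 p"
    using i9 sI by (auto simp: torsion_def pd_def inner_commute, metis add.commute add_eq_0_iff inner_commute)
  have anti2: "\<And>w. w \<in> I \<Longrightarrow> torsion N w \<sigma> 2 p = - torsion N \<sigma> w 2 p"
    using i10 sI by (auto simp: torsion_def pd_def inner_commute, metis add.commute add_eq_0_iff inner_commute)
  have sym: "\<And>w. sff X N w 2 1 p = sff X N w 1 2 p" using s0p by (simp add: sff_def pd_def)
  have ReS: "(\<Sum>\<omega>\<in>I. sff X N \<omega> 2 2 p * torsion N \<omega> \<sigma> 1 p - sff X N \<omega> 2 1 p * torsion N \<omega> \<sigma> 2 p) = S1 - S2"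
    unfolding S1_def S2_def sum_subtractf[symmetric]
  proof (rule sum.cong[OF refl])
    fix w assume w: "w \<in> I"
    show "sff X N w 2 2 p * torsion N w \<sigma> 1 p - sff X N w 2 1 p * torsion N w \<sigma> 2 p =
      sff X N w 1 2 p * torsion N \<sigma> w 2 p - sff X N w 2 2 p * torsion N \<sigma> w 1 p"
      using anti1[OF w] anti2[OF w] sym[of w] by simp
  qed
  have ImS: "(\<Sum>\<omega>\<in>I. sff X N \<omega> 1 2 p * torsion N \<omega> \<sigma> 1 p - sff X N \<omega> 1 1 p * torsion N \<omega> \<sigma> 2 p) = S3 - S4"
    unfolding S3_def S4_def sum_subtractf[symmetric]
  proof (rule sum.cong[OF refl])
    fix w assume w: "w \<in> I"
    show "sff X N w 1 2 p * torsion N w \<sigma> 1 p - sff X N w 1 1 p * torsion N w \<sigma> 2 p =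
      sff X N w 1 1 p * torsion N \<sigma> w 2 p - sff X N w 1 2 p * torsion N \<sigma> w 1 p"
      using anti1[OF w] anti2[OF w] by simp
  qed
  have CS: "(\<Sum>\<omega>\<in>I.
              (complex_of_real (sff X N \<omega> 2 2 p) + \<i> * complex_of_real (sff X N \<omega> 1 2 p))
                 * complex_of_real (torsion N \<omega> \<sigma> 1 p)
            - (complex_of_real (sff X N \<omega> 2 1 p) + \<i> * complex_of_real (sff X N \<omega> 1 1 p))
                 * complex_of_real (torsion N \<omega> \<sigma> 2 p))
     = complex_of_real (S1 - S2) + \<i> * complex_of_real (S3 - S4)"
  proof (rule complex_eqI)
    show "Re (\<Sum>\<omega>\<in>I.
              (complex_of_real (sff X N \<omega> 2 2 p) + \<i> * complex_of_real (sff X N \<omega> 1 2 p))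
                 * complex_of_real (torsion N \<omega> \<sigma> 1 p)
            - (complex_of_real (sff X N \<omega> 2 1 p) + \<i> * complex_of_real (sff X N \<omega> 1 1 p))
                 * complex_of_real (torsion N \<omega> \<sigma> 2 p))
       = Re (complex_of_real (S1 - S2) + \<i> * complex_of_real (S3 - S4))"
      unfolding Re_sum ReS[symmetric] by (simp cong: sum.cong)
    show "Im (\<Sum>\<omega>\<in>I.
              (complex_of_real (sff X N \<omega> 2 2 p) + \<i> * complex_of_real (sff X N \<omega> 1 2 p))
                 * complex_of_real (torsion N \<omega> \<sigma> 1 p)
            - (complex_of_real (sff X N \<omega> 2 1 p) + \<i> * complex_of_real (sff X N \<omega> 1 1 p))
                 * complex_of_real (torsion N \<omega> \<sigma> 2 p))
       = Im (complex_of_real (S1 - S2) + \<i> * complex_of_real (S3 - S4))"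
      unfolding Im_sum ImS[symmetric] by (simp cong: sum.cong)
  qed
  have Lv12e: "Lv12 = Lu22 - a1a * (l11 + l22) / W + S1 - S2" using R by simp
  have Lu12e: "Lu12 = Lv11 - a2a * (l11 + l22) / W - S3 + S4" using Iq by simp
  show ?thesis
    unfolding dwbar_def dw_def dhu dhv dHu dHv W_def[symmetric] I_def[symmetric] CS
    apply (rule complex_eqI)
     apply (simp add: W0 Lv12e Wu2)
     apply (simp add: field_simps W0)
    apply (simp add: W0 Lu12e Wv2)
    apply (simp add: field_simps W0)
    done
qed

end
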